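(* Let $R$ be an arbitrary unital associative ring and let $J=J_2\circ J_1$ act on $M_3(R)$. Then for every $M\in{\rm dom}(J^3)$ there exist invertible diagonal $3\times 3$ matrices $D_1,D_2$ over $R$ such that $J^3(M)=D_1^{-1}MD_2$.
   Context: $R^*$ denotes the group of units of $R$. $M_n^*(R)$ is the set of invertible $n\times n$ matrices over $R$ (usual product), and $M_n^\star(R)$ is the set of $n\times n$ matrices all of whose entries lie in $R^*$. $J_1(M)=M^{-1}$ with domain $M_n^*(R)$; $J_2(M)$ is the matrix with $(j,k)$-entry $(M_{kj})^{-1}$, with domain $M_n^\star(R)$. For maps $f,g$ the composition $g\circ f$ has domain $\{x\in{\rm dom}(f): f(x)\in{\rm dom}(g)\}$; $J^k$ is the $k$-fold composition of $J$ with this natural domain. *)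

theory Defs
  imports "HOL-Analysis.Analysis" "HOL-Library.Numeral_Type"
begin

definition is_unit :: "'a::ring_1 \<Rightarrow> bool" where
  "is_unit u \<longleftrightarrow> (\<exists>v. u * v = 1 \<and> v * u = 1)"

definition ring_inv :: "'a::ring_1 \<Rightarrow> 'a" where
  "ring_inv u = (THE v. u * v = 1 \<and> v * u = 1)"

text \<open>Partial maps are modelled as option-valued functions; None means
  "outside the domain".\<close>

definition J1 :: "'a::ring_1^'n^'n \<Rightarrow> ('a^'n^'n) option" where
  "J1 M = (if invertible M then Some (matrix_inv M) else None)"

definition J2 :: "'a::ring_1^'n^'n \<Rightarrow> ('a^'n^'n) option" where
  "J2 M = (if (\<forall>i j. is_unit (M $ i $ j))
           then Some (\<chi> j k. ring_inv (M $ k $ j)) else None)"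

definition J :: "'a::ring_1^'n^'n \<Rightarrow> ('a^'n^'n) option" where
  "J M = Option.bind (J1 M) J2"

fun J_pow :: "nat \<Rightarrow> 'a::ring_1^'n^'n \<Rightarrow> ('a^'n^'n) option" where
  "J_pow 0 M = Some M"
| "J_pow (Suc k) M = Option.bind (J_pow k M) J"

definition diagonal_mat :: "'a::zero^'n^'n \<Rightarrow> bool" where
  "diagonal_mat D \<longleftrightarrow> (\<forall>i j. i \<noteq> j \<longrightarrow> D $ i $ j = 0)"

end

theory Submission
  imports Defs
begin
lemma four3[simp]: "(4::3) = 1" by simp
lemma five3[simp]: "(5::3) = 2" by simp
lemma k3: fixes k :: 3 shows "k \<noteq> k + 1" "k \<noteq> k + 2" "k + 1 \<noteq> k + 2"
  using exhaust_3[of k] by auto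
lemma sum_k: fixes k :: 3 shows "sum f UNIV = f k + f (k+1) + f (k+2)"
  using exhaust_3[of k] by (auto simp: sum_3 ac_simps)

lemma ring_inv_eq:
  fixes u v :: "'a::ring_1"
  assumes "u * v = 1" "v * u = 1"
  shows "ring_inv u = v"
  unfolding ring_inv_def
proof (rule the_equality)
  show "u * v = 1 \<and> v * u = 1" using assms by simp
  fix w assume "u * w = 1 \<and> w * u = 1"
  then have "w = w * (u * v)" using assms by simp
  also have "\<dots> = (w * u) * v" by (simp add: mult.assoc)
  also have "\<dots> = v" using \<open>u * w = 1 \<and> w * u = 1\<close> by simp
  finally show "w = v" .
qed

lemma unit_inv:
  fixes u :: "'a::ring_1"
  assumes "is_unit u"
  shows "u * ring_inv u = 1" "ring_inv u * u = 1"
proof -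
  obtain v where v: "u * v = 1" "v * u = 1" using assms is_unit_def by blast
  then have "ring_inv u = v" by (rule ring_inv_eq)
  then show "u * ring_inv u = 1" "ring_inv u * u = 1" using v by simp_all
qed

lemma unit_inv_assoc:
  fixes u :: "'a::ring_1"
  assumes "is_unit u"
  shows "u * (ring_inv u * w) = w" "ring_inv u * (u * w) = w"
  using unit_inv[OF assms] by (simp_all add: mult.assoc[symmetric])

lemma unit_ring_inv: "is_unit u \<Longrightarrow> is_unit (ring_inv u)"
  using unit_inv unfolding is_unit_def by blast

lemma ring_inv_inv: "is_unit u \<Longrightarrow> ring_inv (ring_inv u) = u"
  using unit_inv by (metis ring_inv_eq)

lemma unit_mult:
  fixes a b :: "'a::ring_1"
  assumes "is_unit a" "is_unit b" shows "is_unit (a * b)"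
proof -
  have "(a * b) * (ring_inv b * ring_inv a) = 1"
    using unit_inv[OF assms(1)] unit_inv[OF assms(2)] by (simp add: mult.assoc unit_inv_assoc assms)
  moreover have "(ring_inv b * ring_inv a) * (a * b) = 1"
    using unit_inv[OF assms(1)] unit_inv[OF assms(2)] by (simp add: mult.assoc unit_inv_assoc assms)
  ultimately show ?thesis unfolding is_unit_def by blast
qed

lemma two_sided:
  fixes a f g :: "'a::ring_1"
  assumes "is_unit (a * f)" "is_unit (g * a)"
  shows "is_unit a" "is_unit f"
proof -
  let ?u = "a * f" and ?v = "g * a"
  define R where "R = f * ring_inv ?u"
  define L where "L = ring_inv ?v * g"
  have aR: "a * R = 1" unfolding R_def using unit_inv[OF assms(1)] by (simp add: mult.assoc[symmetric])
  have La: "L * a = 1" unfolding L_def using unit_inv[OF assms(2)] by (simp add: mult.assoc)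
  have "L = L * (a * R)" using aR by simp
  also have "\<dots> = R" using La by (simp add: mult.assoc[symmetric])
  finally have LR: "L = R" .
  show ua: "is_unit a" unfolding is_unit_def using aR La LR by blast
  have "f = R * ?u" unfolding R_def using unit_inv[OF assms(1)] by (simp add: mult.assoc)
  also have "\<dots> = ring_inv a * ?u" using ring_inv_eq[OF aR] La LR by simp
  finally have "f = ring_inv a * ?u" .
  then show "is_unit f" using unit_mult[OF unit_ring_inv[OF ua] assms(1)] by simp
qed

lemma comb3:
  fixes \<alpha> r \<beta> :: "3 \<Rightarrow> 'a::ring_1"
  assumes a1: "\<alpha> 1 + \<alpha> 2 + \<alpha> 3 = 0" and a2: "\<alpha> 1 * r 1 + \<alpha> 2 * r 2 + \<alpha> 3 * r 3 = 0"
    and b1: "\<beta> 1 + \<beta> 2 + \<beta> 3 = 0" and b2: "r 1 * \<beta> 1 + r 2 * \<beta> 2 + r 3 * \<beta> 3 = 0"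
    and jm: "j \<noteq> m"
  shows "\<alpha> m * (r m - r j) * \<beta> j = (if m = j + 1 then 1 else -1) * (\<alpha> 2 * (r 2 - r 1) * \<beta> 1)"
proof -
  define E where "E = (\<lambda>j m. \<alpha> m * (r m - r j) * \<beta> j)"
  have R: "E j 1 + E j 2 + E j 3 = 0" for j
  proof -
    have "E j 1 + E j 2 + E j 3 = ((\<alpha> 1 * r 1 + \<alpha> 2 * r 2 + \<alpha> 3 * r 3) - (\<alpha> 1 + \<alpha> 2 + \<alpha> 3) * r j) * \<beta> j"
      unfolding E_def by (simp add: algebra_simps)
    then show ?thesis using a1 a2 by simp
  qed
  have C: "E 1 m + E 2 m + E 3 m = 0" for m
  proof -
    have "E 1 m + E 2 m + E 3 m = \<alpha> m * (r m * (\<beta> 1 + \<beta> 2 + \<beta> 3) - (r 1 * \<beta> 1 + r 2 * \<beta> 2 + r 3 * \<beta> 3))"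
      unfolding E_def by (simp add: algebra_simps)
    then show ?thesis using b1 b2 by simp
  qed
  have d: "E j j = 0" for j unfolding E_def by simp
  have R1: "E 1 2 + E 1 3 = 0" using R[of 1] d[of 1] by simp
  have R2: "E 2 1 + E 2 3 = 0" using R[of 2] d[of 2] by simp
  have R3: "E 3 1 + E 3 2 = 0" using R[of 3] d[of 3] by simp
  have C1: "E 2 1 + E 3 1 = 0" using C[of 1] d[of 1] by simp
  have C2: "E 1 2 + E 3 2 = 0" using C[of 2] d[of 2] by (simp add: add.commute)
  have C3: "E 1 3 + E 2 3 = 0" using C[of 3] d[of 3] by simp
  have e13: "E 1 3 = - E 1 2" using R1 by (simp add: eq_neg_iff_add_eq_0 add.commute)
  have e23: "E 2 3 = E 1 2" using C3 e13 by (simp add: add_eq_0_iff2)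
  have e21: "E 2 1 = - E 1 2" using R2 e23 by (simp add: eq_neg_iff_add_eq_0)
  have e31: "E 3 1 = E 1 2" using C1 e21 by (simp add: add_eq_0_iff2)
  have e32: "E 3 2 = - E 1 2" using C2 by (simp add: eq_neg_iff_add_eq_0 add.commute)
  have "E j m = (if m = j + 1 then 1 else -1) * E 1 2"
    using exhaust_3[of j] exhaust_3[of m] jm
    by (elim disjE) (simp_all add: e13 e23 e21 e31 e32)
  then show ?thesis unfolding E_def by simp
qed
definition Hm :: "'a::ring_1^'n^'n \<Rightarrow> 'a^'n^'n" where
  "Hm M = (\<chi> j k. ring_inv (M $ k $ j))"

lemma mm_entry: "(A ** B) $ i $ j = sum (\<lambda>m. A $ i $ m * B $ m $ j) UNIV"
  by (simp add: matrix_matrix_mult_def)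

lemma mat1_entry: "(mat 1 :: 'a::ring_1^'n^'n) $ i $ j = (if i = j then 1 else 0)"
  by (simp add: mat_def)

lemma qinv:
  fixes X Z :: "'a::ring_1^3^3" and k :: 3
  assumes XZ: "X ** Z = mat 1" and ZX: "Z ** X = mat 1"
    and uX: "\<And>i j. is_unit (X$i$j)" and uZ: "\<And>i j. is_unit (Z$i$j)"
  defines "s \<equiv> k + 1" and "t \<equiv> k + 2"
  shows "is_unit (Z$s$s * ring_inv (Z$k$s) - Z$s$t * ring_inv (Z$k$t))"
proof -
  have cx: "\<And>i j w. X$i$j * (ring_inv (X$i$j) * w) = w" "\<And>i j w. ring_inv (X$i$j) * (X$i$j * w) = w"
    "\<And>i j. X$i$j * ring_inv (X$i$j) = 1" "\<And>i j. ring_inv (X$i$j) * X$i$j = 1"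
    using unit_inv_assoc[OF uX] unit_inv[OF uX] by auto
  have cz: "\<And>i j w. Z$i$j * (ring_inv (Z$i$j) * w) = w" "\<And>i j w. ring_inv (Z$i$j) * (Z$i$j * w) = w"
    "\<And>i j. Z$i$j * ring_inv (Z$i$j) = 1" "\<And>i j. ring_inv (Z$i$j) * Z$i$j = 1"
    using unit_inv_assoc[OF uZ] unit_inv[OF uZ] by auto
  have ks: "k \<noteq> s" "k \<noteq> t" "s \<noteq> t" using k3[of k] unfolding s_def t_def by auto
  have zx: "Z$r$k * X$k$c + Z$r$s * X$s$c + Z$r$t * X$t$c = (if r = c then 1 else 0)" for r c
    using arg_cong[OF ZX, of "\<lambda>M. M $ r $ c"] unfolding mm_entry mat1_entry sum_k[of _ k] s_def t_def by simp
  have xz: "X$r$k * Z$k$c + X$r$s * Z$s$c + X$r$t * Z$t$c = (if r = c then 1 else 0)" for r c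
    using arg_cong[OF XZ, of "\<lambda>M. M $ r $ c"] unfolding mm_entry mat1_entry sum_k[of _ k] s_def t_def by simp
  define q where "q = Z$s$s - Z$s$t * ring_inv (Z$k$t) * Z$k$s"
  define q' where "q' = X$s$s - X$s$t * ring_inv (X$k$t) * X$k$s"
  define R1 where "R1 = Z$k$k * X$k$s + Z$k$s * X$s$s + Z$k$t * X$t$s"
  define R2 where "R2 = Z$k$k * X$k$t + Z$k$s * X$s$t + Z$k$t * X$t$t"
  define R3 where "R3 = Z$s$k * X$k$s + Z$s$s * X$s$s + Z$s$t * X$t$s"
  define R4 where "R4 = Z$s$k * X$k$t + Z$s$s * X$s$t + Z$s$t * X$t$t"
  have "R1 = 0" "R2 = 0" "R3 = 1" "R4 = 0" unfolding R1_def R2_def R3_def R4_def using zx ks by auto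
  have "q * q' = R3 - R4 * (ring_inv (X$k$t) * X$k$s) - Z$s$t * ring_inv (Z$k$t) * R1
        + Z$s$t * ring_inv (Z$k$t) * R2 * (ring_inv (X$k$t) * X$k$s)"
    unfolding q_def q'_def R1_def R2_def R3_def R4_def by (simp add: algebra_simps cx cz)
  then have qq': "q * q' = 1" using \<open>R1 = 0\<close> \<open>R2 = 0\<close> \<open>R3 = 1\<close> \<open>R4 = 0\<close> by simp
  define S1 where "S1 = X$k$k * Z$k$s + X$k$s * Z$s$s + X$k$t * Z$t$s"
  define S2 where "S2 = X$k$k * Z$k$t + X$k$s * Z$s$t + X$k$t * Z$t$t"
  define S3 where "S3 = X$s$k * Z$k$s + X$s$s * Z$s$s + X$s$t * Z$t$s"
  define S4 where "S4 = X$s$k * Z$k$t + X$s$s * Z$s$t + X$s$t * Z$t$t"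
  have "S1 = 0" "S2 = 0" "S3 = 1" "S4 = 0" unfolding S1_def S2_def S3_def S4_def using xz ks by auto
  have "q' * q = S3 - S4 * (ring_inv (Z$k$t) * Z$k$s) - X$s$t * ring_inv (X$k$t) * S1
        + X$s$t * ring_inv (X$k$t) * S2 * (ring_inv (Z$k$t) * Z$k$s)"
    unfolding q_def q'_def S1_def S2_def S3_def S4_def by (simp add: algebra_simps cx cz)
  then have q'q: "q' * q = 1" using \<open>S1 = 0\<close> \<open>S2 = 0\<close> \<open>S3 = 1\<close> \<open>S4 = 0\<close> by simp
  have uq: "is_unit q" unfolding is_unit_def using qq' q'q by blast
  have "Z$s$s * ring_inv (Z$k$s) - Z$s$t * ring_inv (Z$k$t) = q * ring_inv (Z$k$s)"
    unfolding q_def by (simp add: algebra_simps cz)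
  then show ?thesis using unit_mult[OF uq unit_ring_inv[OF uZ]] by simp
qed

lemma term_k:
  fixes X Z P :: "'a::ring_1^3^3" and k :: 3
  assumes XZ: "X ** Z = mat 1" and YP: "Hm Z ** P = mat 1"
    and uX: "\<And>i j. is_unit (X$i$j)" and uZ: "\<And>i j. is_unit (Z$i$j)" and uP: "\<And>i j. is_unit (P$i$j)"
    and ij: "i \<noteq> j"
  defines "s \<equiv> k + 1" and "t \<equiv> k + 2"
  shows "ring_inv (X$k$i) * (X$k$s * (Z$s$s * ring_inv (Z$k$s) - Z$s$t * ring_inv (Z$k$t)) * P$k$k) * ring_inv (P$j$k)
     = (if i = j + 1 then 1 else -1) * (Z$i$s * ring_inv (Z$j$s) - Z$i$t * ring_inv (Z$j$t))"
proof -
  have cx: "\<And>i j w. X$i$j * (ring_inv (X$i$j) * w) = w" "\<And>i j w. ring_inv (X$i$j) * (X$i$j * w) = w"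
    "\<And>i j. X$i$j * ring_inv (X$i$j) = 1" "\<And>i j. ring_inv (X$i$j) * X$i$j = 1"
    using unit_inv_assoc[OF uX] unit_inv[OF uX] by auto
  have cz: "\<And>i j w. Z$i$j * (ring_inv (Z$i$j) * w) = w" "\<And>i j w. ring_inv (Z$i$j) * (Z$i$j * w) = w"
    "\<And>i j. Z$i$j * ring_inv (Z$i$j) = 1" "\<And>i j. ring_inv (Z$i$j) * Z$i$j = 1"
    using unit_inv_assoc[OF uZ] unit_inv[OF uZ] by auto
  have cp: "\<And>i j w. P$i$j * (ring_inv (P$i$j) * w) = w" "\<And>i j w. ring_inv (P$i$j) * (P$i$j * w) = w"
    "\<And>i j. P$i$j * ring_inv (P$i$j) = 1" "\<And>i j. ring_inv (P$i$j) * P$i$j = 1"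
    using unit_inv_assoc[OF uP] unit_inv[OF uP] by auto
  have ks: "k \<noteq> s" "k \<noteq> t" "s \<noteq> t" using k3[of k] unfolding s_def t_def by auto
  define \<alpha> where "\<alpha> = (\<lambda>m. X$k$m * Z$m$t)"
  define r where "r = (\<lambda>m. ring_inv (Z$m$t) * Z$m$s)"
  define \<beta> where "\<beta> = (\<lambda>j. ring_inv (Z$j$s) * P$j$k)"
  define E where "E = (\<lambda>j m. X$k$m * (Z$m$s * ring_inv (Z$j$s) - Z$m$t * ring_inv (Z$j$t)) * P$j$k)"
  have Eab: "E j m = \<alpha> m * (r m - r j) * \<beta> j" for j m
    unfolding E_def \<alpha>_def r_def \<beta>_def by (simp add: algebra_simps cz)
  have xz: "X$a$1 * Z$1$c + X$a$2 * Z$2$c + X$a$3 * Z$3$c = (if a = c then 1 else 0)" for a c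
    using arg_cong[OF XZ, of "\<lambda>M. M $ a $ c"] unfolding mm_entry mat1_entry sum_3 by simp
  have yp: "ring_inv (Z$1$a) * P$1$c + ring_inv (Z$2$a) * P$2$c + ring_inv (Z$3$a) * P$3$c = (if a = c then 1 else 0)" for a c
    using arg_cong[OF YP, of "\<lambda>M. M $ a $ c"] unfolding mm_entry mat1_entry sum_3 Hm_def by simp
  have a1: "\<alpha> 1 + \<alpha> 2 + \<alpha> 3 = 0" unfolding \<alpha>_def using xz[of k t] ks by simp
  have a2: "\<alpha> 1 * r 1 + \<alpha> 2 * r 2 + \<alpha> 3 * r 3 = 0" unfolding \<alpha>_def r_def using xz[of k s] ks
    by (simp add: mult.assoc cz)
  have b1: "\<beta> 1 + \<beta> 2 + \<beta> 3 = 0" unfolding \<beta>_def using yp[of s k] ks by simp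
  have b2: "r 1 * \<beta> 1 + r 2 * \<beta> 2 + r 3 * \<beta> 3 = 0" unfolding \<beta>_def r_def using yp[of t k] ks
    by (simp add: mult.assoc cz)
  have comb: "E j m = (if m = j + 1 then 1 else -1) * (\<alpha> 2 * (r 2 - r 1) * \<beta> 1)" if "j \<noteq> m" for j m
    unfolding Eab by (rule comb3[OF a1 a2 b1 b2 that])
  have ek: "E k s = \<alpha> 2 * (r 2 - r 1) * \<beta> 1" using comb[of k s] ks unfolding s_def by simp
  have "E j i = (if i = j + 1 then 1 else -1) * E k s" using comb[of j i] ij ek by simp
  then have ek2: "E k s = (if i = j + 1 then 1 else -1) * E j i" by auto
  have "ring_inv (X$k$i) * E k s * ring_inv (P$j$k)
      = (if i = j + 1 then 1 else -1) * (ring_inv (X$k$i) * E j i * ring_inv (P$j$k))"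
    unfolding ek2 by simp
  also have "ring_inv (X$k$i) * E j i * ring_inv (P$j$k) = Z$i$s * ring_inv (Z$j$s) - Z$i$t * ring_inv (Z$j$t)"
    unfolding E_def by (simp add: algebra_simps cx cp)
  finally show ?thesis unfolding E_def by simp
qed

lemma core:
  fixes X Z P :: "'a::ring_1^3^3"
  assumes XZ: "X ** Z = mat 1" and ZX: "Z ** X = mat 1" and YP: "Hm Z ** P = mat 1"
    and uX: "\<And>i j. is_unit (X$i$j)" and uZ: "\<And>i j. is_unit (Z$i$j)" and uP: "\<And>i j. is_unit (P$i$j)"
  defines "e \<equiv> \<lambda>k. X$k$(k+1) * (Z$(k+1)$(k+1) * ring_inv (Z$k$(k+1)) - Z$(k+1)$(k+2) * ring_inv (Z$k$(k+2))) * P$k$k"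
  shows "is_unit (e k)"
    and "i \<noteq> j \<Longrightarrow> (\<Sum>k\<in>UNIV. ring_inv (X$k$i) * e k * ring_inv (P$j$k)) = 0"
proof -
  show "is_unit (e k)" unfolding e_def
    by (intro unit_mult uX uP qinv[OF XZ ZX uX uZ])
next
  assume ij: "i \<noteq> j"
  define w where "w = (\<lambda>a. Z$i$a * ring_inv (Z$j$a))"
  have T: "ring_inv (X$k$i) * e k * ring_inv (P$j$k) = (if i = j + 1 then 1 else -1) * (w (k+1) - w (k+2))" for k
    unfolding e_def w_def by (rule term_k[OF XZ YP uX uZ uP ij])
  have "(\<Sum>k\<in>UNIV. ring_inv (X$k$i) * e k * ring_inv (P$j$k))
       = (if i = j + 1 then 1 else -1) * ((w 2 - w 3) + (w 3 - w 1) + (w 1 - w 2))"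
    unfolding sum_3 T by (simp add: algebra_simps)
  then show "(\<Sum>k\<in>UNIV. ring_inv (X$k$i) * e k * ring_inv (P$j$k)) = 0" by simp
qed

definition dg :: "('n \<Rightarrow> 'a::ring_1) \<Rightarrow> 'a^'n^'n" where
  "dg e = (\<chi> i j. if i = j then e i else 0)"

lemma mul_dg: "(A ** dg e) $ i $ j = A $ i $ j * e j"
proof -
  have "(A ** dg e) $ i $ j = (\<Sum>m\<in>UNIV. if m = j then A $ i $ m * e m else 0)"
    unfolding mm_entry dg_def by (intro sum.cong) auto
  also have "\<dots> = A $ i $ j * e j" by (simp add: sum.delta')
  finally show ?thesis .
qed

lemma dg_mul: "(dg e ** A) $ i $ j = e i * A $ i $ j"
proof -
  have "(dg e ** A) $ i $ j = (\<Sum>m\<in>UNIV. if m = i then e m * A $ m $ j else 0)"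
    unfolding mm_entry dg_def by (intro sum.cong) auto
  also have "\<dots> = e i * A $ i $ j" by (simp add: sum.delta)
  finally show ?thesis .
qed

lemma mul_dg_mul: "(A ** dg e ** B) $ i $ j = (\<Sum>k\<in>UNIV. A $ i $ k * e k * B $ k $ j)"
  unfolding mm_entry[of "A ** dg e"] mul_dg ..

lemma matrix_inv_props:
  assumes "invertible A"
  shows "A ** matrix_inv A = mat 1" "matrix_inv A ** A = mat 1"
  using someI_ex[OF assms[unfolded invertible_def]] unfolding matrix_inv_def by auto

lemma matrix_inv_eq:
  fixes A B :: "'a::ring_1^'n^'n"
  assumes "A ** B = mat 1" "B ** A = mat 1"
  shows "matrix_inv A = B"
proof -
  have inv: "invertible A" unfolding invertible_def using assms by blast
  have "matrix_inv A = matrix_inv A ** (A ** B)" using assms by simp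
  also have "\<dots> = B" by (simp add: matrix_mul_assoc matrix_inv_props[OF inv])
  finally show ?thesis .
qed

lemma Hm_Hm:
  fixes N :: "'a::ring_1^'n^'n"
  assumes "\<And>i j. is_unit (N$i$j)" shows "Hm (Hm N) = N"
  unfolding Hm_def by (simp add: vec_eq_iff ring_inv_inv assms)

lemma J_step:
  assumes "J A \<noteq> None"
  shows "invertible A" "\<And>i j. is_unit (matrix_inv A $ i $ j)" "J A = Some (Hm (matrix_inv A))"
  using assms by (auto simp: J_def J1_def J2_def Hm_def split: if_splits)

lemma dg_diag: "diagonal_mat (dg e)"
  unfolding diagonal_mat_def dg_def by simp

lemma dg_invertible:
  fixes e :: "'n::finite \<Rightarrow> 'a::ring_1"
  assumes "\<And>i. is_unit (e i)"
  shows "invertible (dg e)" "matrix_inv (dg e) = dg (\<lambda>i. ring_inv (e i))"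
proof -
  have 1: "dg e ** dg (\<lambda>i. ring_inv (e i)) = mat 1"
    by (simp only: vec_eq_iff dg_mul) (simp add: dg_def mat_def unit_inv[OF assms])
  have 2: "dg (\<lambda>i. ring_inv (e i)) ** dg e = mat 1"
    by (simp only: vec_eq_iff dg_mul) (simp add: dg_def mat_def unit_inv[OF assms])
  show "invertible (dg e)" unfolding invertible_def using 1 2 by blast
  show "matrix_inv (dg e) = dg (\<lambda>i. ring_inv (e i))" by (rule matrix_inv_eq[OF 1 2])
qed

theorem theorem1:
  fixes M :: "'a::ring_1^3^3"
  assumes "J_pow 3 M \<noteq> None"
  shows "\<exists>D1 D2 :: 'a^3^3. diagonal_mat D1 \<and> invertible D1 \<and>
           diagonal_mat D2 \<and> invertible D2 \<and>
           the (J_pow 3 M) = matrix_inv D1 ** M ** D2"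
proof -
  have J3: "J_pow 3 M = Option.bind (Option.bind (J M) J) J"
    by (simp add: numeral_3_eq_3)
  have JM: "J M \<noteq> None" using assms unfolding J3 by (cases "J M") auto
  define N0 where "N0 = matrix_inv M"
  define A1 where "A1 = Hm N0"
  have iM: "invertible M" and uN0: "\<And>i j. is_unit (N0$i$j)" and JM': "J M = Some A1"
    using J_step[OF JM] unfolding N0_def A1_def by auto
  have JA1: "J A1 \<noteq> None" using assms unfolding J3 JM' by (cases "J A1") auto
  define N1 where "N1 = matrix_inv A1"
  define A2 where "A2 = Hm N1"
  have iA1: "invertible A1" and uN1: "\<And>i j. is_unit (N1$i$j)" and JA1': "J A1 = Some A2"
    using J_step[OF JA1] unfolding N1_def A2_def by auto
  have JA2: "J A2 \<noteq> None" using assms unfolding J3 by (cases "J A2") (auto simp: JM' JA1')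
  define N2 where "N2 = matrix_inv A2"
  define A3 where "A3 = Hm N2"
  have iA2: "invertible A2" and uN2: "\<And>i j. is_unit (N2$i$j)" and JA2': "J A2 = Some A3"
    using J_step[OF JA2] unfolding N2_def A3_def by auto
  have the3: "the (J_pow 3 M) = A3" unfolding J3 by (simp add: JM' JA1' JA2')
  have MN0: "M ** N0 = mat 1" "N0 ** M = mat 1" using matrix_inv_props[OF iM] unfolding N0_def by auto
  have A1N1: "A1 ** N1 = mat 1" "N1 ** A1 = mat 1" using matrix_inv_props[OF iA1] unfolding N1_def by auto
  have A2N2: "A2 ** N2 = mat 1" "N2 ** A2 = mat 1" using matrix_inv_props[OF iA2] unfolding N2_def by auto
  have uA1: "\<And>i j. is_unit (A1$i$j)" unfolding A1_def Hm_def using unit_ring_inv[OF uN0] by simp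
  have uA2: "\<And>i j. is_unit (A2$i$j)" unfolding A2_def Hm_def using unit_ring_inv[OF uN1] by simp
  have uA3: "\<And>i j. is_unit (A3$i$j)" unfolding A3_def Hm_def using unit_ring_inv[OF uN2] by simp
  have HA1: "Hm A1 = N0" unfolding A1_def by (rule Hm_Hm[OF uN0])
  have HN1: "Hm (Hm N1) = N1" by (rule Hm_Hm[OF uN1])
  define e where "e \<equiv> \<lambda>k. A1$k$(k+1) * (N1$(k+1)$(k+1) * ring_inv (N1$k$(k+1)) - N1$(k+1)$(k+2) * ring_inv (N1$k$(k+2))) * N2$k$k"
  have YP: "Hm N1 ** N2 = mat 1" using A2N2 unfolding A2_def by simp
  have ue: "\<And>k. is_unit (e k)" unfolding e_def by (rule core(1)[OF A1N1 YP uA1 uN1 uN2])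
  have off1: "i \<noteq> j \<Longrightarrow> (\<Sum>k\<in>UNIV. ring_inv (A1$k$i) * e k * ring_inv (N2$j$k)) = 0" for i j
    unfolding e_def by (rule core(2)[OF A1N1 YP uA1 uN1 uN2])
  define e' where "e' \<equiv> \<lambda>k. N2$k$(k+1) * (A2$(k+1)$(k+1) * ring_inv (A2$k$(k+1)) - A2$(k+1)$(k+2) * ring_inv (A2$k$(k+2))) * A1$k$k"
  have YP2: "Hm A2 ** A1 = mat 1" using A1N1 HN1 unfolding A2_def by simp
  have ue': "\<And>k. is_unit (e' k)" unfolding e'_def by (rule core(1)[OF A2N2(2) A2N2(1) YP2 uN2 uA2 uA1])
  have off2: "i \<noteq> j \<Longrightarrow> (\<Sum>k\<in>UNIV. ring_inv (N2$k$i) * e' k * ring_inv (A1$j$k)) = 0" for i j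
    unfolding e'_def by (rule core(2)[OF A2N2(2) A2N2(1) YP2 uN2 uA2 uA1])
  have rA1: "ring_inv (A1$i$j) = N0$j$i" for i j unfolding A1_def Hm_def by (simp add: ring_inv_inv uN0)
  have rN2: "ring_inv (N2$i$j) = A3$j$i" for i j unfolding A3_def Hm_def by simp
  define f where "f = (\<lambda>j. (N0 ** dg e ** A3) $ j $ j)"
  define f' where "f' = (\<lambda>j. (A3 ** dg e' ** N0) $ j $ j)"
  have F: "N0 ** dg e ** A3 = dg f"
  proof -
    have "(N0 ** dg e ** A3) $ i $ j = dg f $ i $ j" for i j
    proof (cases "i = j")
      case True then show ?thesis unfolding f_def dg_def by simp
    next
      case False
      have "(N0 ** dg e ** A3) $ i $ j = (\<Sum>k\<in>UNIV. ring_inv (A1$k$i) * e k * ring_inv (N2$j$k))"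
        unfolding mul_dg_mul rA1 rN2 ..
      then show ?thesis using off1[OF False] False unfolding dg_def by simp
    qed
    then show ?thesis by (simp add: vec_eq_iff)
  qed
  have F': "A3 ** dg e' ** N0 = dg f'"
  proof -
    have "(A3 ** dg e' ** N0) $ i $ j = dg f' $ i $ j" for i j
    proof (cases "i = j")
      case True then show ?thesis unfolding f'_def dg_def by simp
    next
      case False
      have "(A3 ** dg e' ** N0) $ i $ j = (\<Sum>k\<in>UNIV. ring_inv (N2$k$i) * e' k * ring_inv (A1$j$k))"
        unfolding mul_dg_mul rA1 rN2 ..
      then show ?thesis using off2[OF False] False unfolding dg_def by simp
    qed
    then show ?thesis by (simp add: vec_eq_iff)
  qed
  have L: "dg e ** A3 = M ** dg f"
  proof -
    have "M ** dg f = M ** (N0 ** dg e ** A3)" using F by simp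
    also have "\<dots> = dg e ** A3" by (simp add: matrix_mul_assoc MN0)
    finally show ?thesis by simp
  qed
  have R: "A3 ** dg e' = dg f' ** M"
  proof -
    have "dg f' ** M = (A3 ** dg e' ** N0) ** M" using F' by simp
    also have "\<dots> = A3 ** dg e'" by (simp add: matrix_mul_assoc[symmetric] MN0)
    finally show ?thesis by simp
  qed
  have Lij: "e j * A3$j$k = M$j$k * f k" for j k
    using arg_cong[OF L, of "\<lambda>X. X $ j $ k"] by (simp add: mul_dg dg_mul)
  have Rij: "A3$j$k * e' k = f' j * M$j$k" for j k
    using arg_cong[OF R, of "\<lambda>X. X $ j $ k"] by (simp add: mul_dg dg_mul)
  have uf: "is_unit (f k)" for k
  proof -
    have "is_unit (M$k$k * f k)" using Lij[of k k] unit_mult[OF ue[of k] uA3[of k k]] by simp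
    moreover have "is_unit (f' k * M$k$k)" using Rij[of k k] unit_mult[OF uA3[of k k] ue'[of k]] by simp
    ultimately show ?thesis by (rule two_sided(2))
  qed
  have A3eq: "A3 = matrix_inv (dg e) ** M ** dg f"
  proof -
    have "A3 $ j $ k = (matrix_inv (dg e) ** M ** dg f) $ j $ k" for j k
    proof -
      have "A3 $ j $ k = ring_inv (e j) * (e j * A3$j$k)" by (simp add: unit_inv_assoc ue)
      also have "\<dots> = ring_inv (e j) * M$j$k * f k" by (simp add: Lij mult.assoc)
      finally show ?thesis by (simp add: mul_dg dg_mul dg_invertible(2)[OF ue])
    qed
    then show ?thesis by (simp add: vec_eq_iff)
  qed
  have i1: "invertible (dg e)" by (intro dg_invertible(1) ue)
  have i2: "invertible (dg f)" by (intro dg_invertible(1) uf)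
  show ?thesis
    apply (rule exI[of _ "dg e"], rule exI[of _ "dg f"])
    using dg_diag[of e] dg_diag[of f] i1 i2 the3 A3eq by simp
qed

end
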